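(* Let $a<b$ and let $f:[a,b]\rightarrow\mathbb{R}$ be a twice continuously differentiable mapping in $(a,b)$ with $f''\in L^2[a,b]$. Then \[ \left|f\left(\frac{a+b}{2}\right)-\frac{1}{b-a}\int_{a}^{b}f(t)\,dt\right|\leq \frac{(b-a)^{3/2}}{2\sqrt{3}\pi}\|f''\|_2. \]
   Context: $\|g\|_2=\left(\int_a^b g(t)^2\,dt\right)^{1/2}$. *)

theory Defs
  imports "HOL-Analysis.Analysis"
begin

definition L2_norm :: "real \<Rightarrow> real \<Rightarrow> (real \<Rightarrow> real) \<Rightarrow> real" where
  "L2_norm a b g = sqrt (integral {a..b} (\<lambda>t. (g t)^2))"

end

theory Submission
  imports Defs
begin

lemma cmp:
  fixes \<phi> \<psi> \<phi>' \<psi>' :: "real \<Rightarrow> real"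
  assumes X: "0 \<le> X" and c1: "continuous_on {0..X} \<phi>" and c2: "continuous_on {0..X} \<psi>"
    and d1: "\<And>x. 0 < x \<Longrightarrow> x < X \<Longrightarrow> (\<phi> has_real_derivative \<phi>' x) (at x)"
    and d2: "\<And>x. 0 < x \<Longrightarrow> x < X \<Longrightarrow> (\<psi> has_real_derivative \<psi>' x) (at x)"
    and b: "\<And>x. 0 < x \<Longrightarrow> x < X \<Longrightarrow> \<bar>\<phi>' x\<bar> \<le> \<psi>' x"
  shows "\<bar>\<phi> X - \<phi> 0\<bar> \<le> \<psi> X - \<psi> 0"
proof -
  have "(\<lambda>x. \<psi> x - \<phi> x) 0 \<le> (\<lambda>x. \<psi> x - \<phi> x) X"
  proof (rule DERIV_nonneg_imp_increasing_open[OF X])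
    fix x assume "0 < x" "x < X"
    then show "\<exists>y. ((\<lambda>x. \<psi> x - \<phi> x) has_real_derivative y) (at x) \<and> 0 \<le> y"
      using d1 d2 b[of x] by (intro exI[of _ "\<psi>' x - \<phi>' x"]) (auto intro: derivative_intros)
  qed (intro continuous_intros c1 c2)
  moreover have "(\<lambda>x. \<psi> x + \<phi> x) 0 \<le> (\<lambda>x. \<psi> x + \<phi> x) X"
  proof (rule DERIV_nonneg_imp_increasing_open[OF X])
    fix x assume "0 < x" "x < X"
    then show "\<exists>y. ((\<lambda>x. \<psi> x + \<phi> x) has_real_derivative y) (at x) \<and> 0 \<le> y"
      using d1 d2 b[of x] by (intro exI[of _ "\<psi>' x + \<phi>' x"]) (auto intro: derivative_intros)
  qed (intro continuous_intros c1 c2)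
  ultimately show ?thesis by simp
qed

lemma CS:
  fixes g :: "real \<Rightarrow> real"
  assumes "c \<le> d" "continuous_on {c..d} g"
  shows "(integral {c..d} g)^2 \<le> (d - c) * integral {c..d} (\<lambda>t. (g t)^2)"
proof (cases "c = d")
  case True then show ?thesis by simp
next
  case False
  then have L: "d - c > 0" using assms by simp
  define I where "I = integral {c..d} g"
  define J where "J = integral {c..d} (\<lambda>t. (g t)^2)"
  define l where "l = I / (d - c)"
  have hI: "(g has_integral I) {c..d}" unfolding I_def
    using integrable_continuous_real[OF assms(2)] by blast
  have hJ: "((\<lambda>t. (g t)^2) has_integral J) {c..d}" unfolding J_def
    using integrable_continuous_real[of c d "\<lambda>t. (g t)^2"] assms(2)
    by (auto intro: continuous_intros)
  have hK: "((\<lambda>t. l^2) has_integral (d - c) * l^2) {c..d}"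
    using has_integral_const_real[of "l^2" c d] assms(1) by simp
  have "((\<lambda>t. (g t)^2 - 2 * l * g t + l^2) has_integral (J - 2 * l * I + (d - c) * l^2)) {c..d}"
    by (intro has_integral_add has_integral_diff has_integral_mult_right hI hJ hK)
  moreover have "\<And>t. (g t)^2 - 2 * l * g t + l^2 = (g t - l)^2" by (simp add: power2_eq_square algebra_simps)
  ultimately have "((\<lambda>t. (g t - l)^2) has_integral (J - 2 * l * I + (d - c) * l^2)) {c..d}" by simp
  then have "0 \<le> J - 2 * l * I + (d - c) * l^2"
    by (rule has_integral_nonneg) simp
  also have "J - 2 * l * I + (d - c) * l^2 = J - I^2 / (d - c)"
  proof -
    have "\<And>L. L > 0 \<Longrightarrow> J - 2 * (I / L) * I + L * (I / L)^2 = J - I^2 / L"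
      by (simp add: field_simps power2_eq_square)
    then show ?thesis using L unfolding l_def by blast
  qed
  finally show ?thesis using L unfolding I_def[symmetric] J_def[symmetric]
    by (simp add: field_simps)
qed

theorem corollary2p7:
  fixes f f' f'' :: "real \<Rightarrow> real" and a b :: real
  assumes ab: "a < b"
    and df: "\<And>x. x \<in> {a<..<b} \<Longrightarrow> (f has_real_derivative f' x) (at x)"
    and df': "\<And>x. x \<in> {a<..<b} \<Longrightarrow> (f' has_real_derivative f'' x) (at x)"
    and cf'': "continuous_on {a<..<b} f''"
    and int2: "(\<lambda>t. (f'' t)^2) integrable_on {a..b}"
  shows "\<bar>f ((a + b) / 2) - (1 / (b - a)) * integral {a..b} f\<bar>
           \<le> (b - a) powr (3/2) / (2 * sqrt 3 * pi) * L2_norm a b f''"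
proof -
  define m where "m = (a + b) / 2"
  define h where "h = (b - a) / 2"
  define Q where "Q = integral {a..b} (\<lambda>t. (f'' t)^2)"
  define N where "N = L2_norm a b f''"
  have N: "N = sqrt Q" unfolding N_def Q_def L2_norm_def ..
  have h0: "h > 0" using ab unfolding h_def by simp
  have am: "a = m - h" and bm: "b = m + h" unfolding m_def h_def by (simp_all add: field_simps)
  have Q0: "Q \<ge> 0" unfolding Q_def by (rule integral_nonneg[OF int2]) simp
  have key: "\<bar>f' d - f' c\<bar> \<le> sqrt (d - c) * N" if cd: "a < c" "c \<le> d" "d < b" for c d
  proof -
    have cc: "continuous_on {c..d} f''"
      by (rule continuous_on_subset[OF cf'']) (use cd in auto)
    have "(f'' has_integral (f' d - f' c)) {c..d}"
    proof (rule fundamental_theorem_of_calculus[OF cd(2)])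
      fix x assume "x \<in> {c..d}"
      then have "x \<in> {a<..<b}" using cd by auto
      then show "(f' has_vector_derivative f'' x) (at x within {c..d})"
        using df' has_real_derivative_iff_has_vector_derivative has_vector_derivative_at_within by blast
    qed
    then have eq: "integral {c..d} f'' = f' d - f' c" by (rule integral_unique)
    have i1: "(\<lambda>t. (f'' t)^2) integrable_on {c..d}"
      by (rule integrable_on_subinterval[OF int2]) (use cd in auto)
    have "integral {c..d} (\<lambda>t. (f'' t)^2) \<le> Q" unfolding Q_def
      by (rule integral_subset_le) (use cd i1 int2 in auto)
    then have "(f' d - f' c)^2 \<le> (d - c) * Q"
      using CS[OF cd(2) cc] eq cd by (metis diff_ge_0_iff_ge mult_left_mono order_trans)
    then have "sqrt ((f' d - f' c)^2) \<le> sqrt ((d - c) * Q)" by (rule real_sqrt_le_mono)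
    then show ?thesis using N by (simp add: real_sqrt_mult)
  qed
  define M1 where "M1 = \<bar>f' m\<bar> + sqrt h * N"
  have N0: "N \<ge> 0" using N Q0 by simp
  have bf': "\<bar>f' y\<bar> \<le> M1" if y: "y \<in> {a<..<b}" for y
  proof (cases "m \<le> y")
    case True
    have "\<bar>f' y - f' m\<bar> \<le> sqrt (y - m) * N" using key[of m y] True y am h0 by auto
    also have "\<dots> \<le> sqrt h * N" using y bm True N0 by (intro mult_right_mono) auto
    finally show ?thesis unfolding M1_def by linarith
  next
    case False
    have "\<bar>f' m - f' y\<bar> \<le> sqrt (m - y) * N" using key[of y m] False y bm h0 by auto
    also have "\<dots> \<le> sqrt h * N" using y am False N0 by (intro mult_right_mono) auto
    finally show ?thesis unfolding M1_def by linarith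
  qed
  have M10: "M1 \<ge> 0" unfolding M1_def using N0 h0 by simp
  define M0 where "M0 = \<bar>f m\<bar> + M1 * h"
  have bf: "\<bar>f y\<bar> \<le> M0" if y: "y \<in> {a<..<b}" for y
  proof -
    have "\<bar>f y - f m\<bar> \<le> M1 * h"
    proof (cases "y = m")
      case True then show ?thesis using M10 h0 by simp
    next
      case False
      define lo where "lo = min y m"
      define hi where "hi = max y m"
      have lh: "lo < hi" using False unfolding lo_def hi_def by auto
      have sub: "{lo..hi} \<subseteq> {a<..<b}" using y am bm h0 unfolding lo_def hi_def by auto
      obtain z where z: "lo < z" "z < hi" "f hi - f lo = (hi - lo) * f' z"
      proof -
        have "\<And>x. lo \<le> x \<Longrightarrow> x \<le> hi \<Longrightarrow> (f has_real_derivative f' x) (at x)"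
          using sub df by auto
        then show ?thesis using MVT2[OF lh, of f f'] that by blast
      qed
      have "z \<in> {lo..hi}" using z by auto
      then have "\<bar>f' z\<bar> \<le> M1" using sub by (intro bf') blast
      moreover have "hi - lo \<le> h" using y am bm unfolding lo_def hi_def by auto
      moreover have "\<bar>f y - f m\<bar> = (hi - lo) * \<bar>f' z\<bar>"
      proof -
        have "\<bar>f hi - f lo\<bar> = (hi - lo) * \<bar>f' z\<bar>" using z lh by (simp add: abs_mult)
        moreover have "\<bar>f y - f m\<bar> = \<bar>f hi - f lo\<bar>"
          unfolding lo_def hi_def by (cases "y \<le> m") (auto simp: abs_minus_commute)
        ultimately show ?thesis by simp
      qed
      ultimately show ?thesis using lh mult_mono[of "hi - lo" h "\<bar>f' z\<bar>" M1] M10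
        by (simp add: mult.commute)
    qed
    then show ?thesis unfolding M0_def by linarith
  qed
  have contf: "continuous_on {a<..<b} f"
    using df by (meson DERIV_isCont continuous_at_imp_continuous_on)
  have fint: "f integrable_on {a..b}"
  proof -
    have "f integrable_on {a<..<b}"
    proof (rule measurable_bounded_by_integrable_imp_integrable_real)
      show "f \<in> borel_measurable (lebesgue_on {a<..<b})"
        by (rule continuous_imp_measurable_on_sets_lebesgue[OF contf]) simp
      show "(\<lambda>x. M0) integrable_on {a<..<b}"
        using integrable_on_open_interval_real by blast
    qed (use bf in auto)
    then show ?thesis using integrable_on_open_interval_real by blast
  qed
  define G where "G y = integral {a..y} f" for y
  have Gc: "continuous_on {a..b} G" unfolding G_def[abs_def] by (rule indefinite_integral_continuous_1[OF fint])
  have dG: "(G has_real_derivative f y) (at y)" if y: "y \<in> {a<..<b}" for y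
  proof -
    have "continuous (at y within ({a..b} - {})) f"
      using DERIV_isCont[OF df[OF y]] by (rule continuous_at_imp_continuous_at_within)
    from integral_has_vector_derivative_continuous_at[OF fint _ _ this] y
    have "(G has_vector_derivative f y) (at y within {a..b})" unfolding G_def[abs_def] by auto
    moreover have "at y within {a..b} = at y" using y by (intro at_within_interior) auto
    ultimately show ?thesis using has_real_derivative_iff_has_vector_derivative by metis
  qed
  define D0 where "D0 x = G (m + x) - G (m - x) - 2 * x * f m" for x
  define D1 where "D1 x = f (m + x) + f (m - x) - 2 * f m" for x
  define D2 where "D2 x = f' (m + x) - f' (m - x)" for x
  define B where "B = sqrt 2 * N"
  have B0: "B \<ge> 0" unfolding B_def using N0 by simp
  have inI: "m + x \<in> {a<..<b}" "m - x \<in> {a<..<b}" if "\<bar>x\<bar> < h" for x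
    using that am bm by auto
  have dD0: "(D0 has_real_derivative D1 x) (at x)" if "\<bar>x\<bar> < h" for x
  proof -
    have "((\<lambda>x. G (m + x)) has_real_derivative f (m + x) * 1) (at x)"
      by (rule DERIV_chain2[where g="\<lambda>x. m + x", OF dG[OF inI(1)[OF that]]]) (auto intro!: derivative_eq_intros)
    moreover have "((\<lambda>x. G (m - x)) has_real_derivative f (m - x) * (-1)) (at x)"
      by (rule DERIV_chain2[where g="\<lambda>x. m - x", OF dG[OF inI(2)[OF that]]]) (auto intro!: derivative_eq_intros)
    ultimately show ?thesis unfolding D0_def[abs_def] D1_def
      by (auto intro!: derivative_eq_intros)
  qed
  have dD1: "(D1 has_real_derivative D2 x) (at x)" if "\<bar>x\<bar> < h" for x
  proof -
    have "((\<lambda>x. f (m + x)) has_real_derivative f' (m + x) * 1) (at x)"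
      by (rule DERIV_chain2[where g="\<lambda>x. m + x", OF df[OF inI(1)[OF that]]]) (auto intro!: derivative_eq_intros)
    moreover have "((\<lambda>x. f (m - x)) has_real_derivative f' (m - x) * (-1)) (at x)"
      by (rule DERIV_chain2[where g="\<lambda>x. m - x", OF df[OF inI(2)[OF that]]]) (auto intro!: derivative_eq_intros)
    ultimately show ?thesis unfolding D1_def[abs_def] D2_def
      by (auto intro!: derivative_eq_intros)
  qed
  have bD2: "\<bar>D2 x\<bar> \<le> B * sqrt x" if "0 \<le> x" "x < h" for x
  proof -
    have "\<bar>D2 x\<bar> \<le> sqrt ((m + x) - (m - x)) * N" unfolding D2_def
      using key[of "m - x" "m + x"] that am bm by auto
    also have "sqrt ((m + x) - (m - x)) = sqrt 2 * sqrt x" by (simp add: real_sqrt_mult[symmetric])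
    finally show ?thesis unfolding B_def by (simp add: mult_ac)
  qed
  have dsq: "((\<lambda>x. c * x * sqrt x) has_real_derivative (3/2) * c * sqrt x) (at x)" if "x > 0" for x c
  proof -
    have "((\<lambda>x. c * x * sqrt x) has_real_derivative c * 1 * sqrt x + c * x * (inverse (sqrt x) / 2)) (at x)"
      using that by (auto intro!: derivative_eq_intros)
    moreover have "c * 1 * sqrt x + c * x * (inverse (sqrt x) / 2) = (3/2) * c * sqrt x"
    proof -
      have "x * inverse (sqrt x) = sqrt x" using that
        by (metis divide_inverse real_div_sqrt less_imp_le)
      then show ?thesis by (simp add: algebra_simps)
    qed
    ultimately show ?thesis by metis
  qed
  have dsq2: "((\<lambda>x. c * x^2 * sqrt x) has_real_derivative (5/2) * c * x * sqrt x) (at x)" if "x > 0" for x c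
  proof -
    have "((\<lambda>x. c * x^2 * sqrt x) has_real_derivative c * (2 * x) * sqrt x + c * x^2 * (inverse (sqrt x) / 2)) (at x)"
      using that by (auto intro!: derivative_eq_intros)
    moreover have "c * (2 * x) * sqrt x + c * x^2 * (inverse (sqrt x) / 2) = (5/2) * c * x * sqrt x"
    proof -
      have "x * inverse (sqrt x) = sqrt x" using that
        by (metis divide_inverse real_div_sqrt less_imp_le)
      then have "x^2 * inverse (sqrt x) = x * sqrt x" by (simp add: power2_eq_square mult.assoc)
      then show ?thesis by (simp add: algebra_simps)
    qed
    ultimately show ?thesis by metis
  qed
  have contI: "continuous_on {0..X} F" if "X < h" "\<And>x. \<bar>x\<bar> < h \<Longrightarrow> (F has_real_derivative F' x) (at x)" for X F F'
  proof (rule continuous_at_imp_continuous_on, rule ballI)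
    fix x assume "x \<in> {0..X}"
    then have "\<bar>x\<bar> < h" using that(1) by auto
    then show "isCont F x" using that(2) DERIV_isCont by blast
  qed
  have bD1: "\<bar>D1 X\<bar> \<le> (2/3) * B * X * sqrt X" if X: "0 \<le> X" "X < h" for X
  proof -
    have "\<bar>D1 X - D1 0\<bar> \<le> (\<lambda>x. (2/3) * B * x * sqrt x) X - (\<lambda>x. (2/3) * B * x * sqrt x) 0"
    proof (rule cmp[OF X(1)])
      show "continuous_on {0..X} D1" by (rule contI[OF X(2) dD1])
      show "continuous_on {0..X} (\<lambda>x. (2/3) * B * x * sqrt x)" by (intro continuous_intros)
      fix x assume x: "0 < x" "x < X"
      show "(D1 has_real_derivative D2 x) (at x)" using x X by (intro dD1) auto
      show "((\<lambda>x. (2/3) * B * x * sqrt x) has_real_derivative (3/2) * ((2/3) * B) * sqrt x) (at x)"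
        by (rule dsq[OF x(1)])
      show "\<bar>D2 x\<bar> \<le> (3/2) * ((2/3) * B) * sqrt x" using bD2[of x] x X by simp
    qed
    then show ?thesis unfolding D1_def by simp
  qed
  have bD0: "\<bar>D0 X\<bar> \<le> (4/15) * B * X^2 * sqrt X" if X: "0 \<le> X" "X < h" for X
  proof -
    have "\<bar>D0 X - D0 0\<bar> \<le> (\<lambda>x. (4/15) * B * x^2 * sqrt x) X - (\<lambda>x. (4/15) * B * x^2 * sqrt x) 0"
    proof (rule cmp[OF X(1)])
      show "continuous_on {0..X} D0" by (rule contI[OF X(2) dD0])
      show "continuous_on {0..X} (\<lambda>x. (4/15) * B * x^2 * sqrt x)" by (intro continuous_intros)
      fix x assume x: "0 < x" "x < X"
      show "(D0 has_real_derivative D1 x) (at x)" using x X by (intro dD0) auto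
      show "((\<lambda>x. (4/15) * B * x^2 * sqrt x) has_real_derivative (5/2) * ((4/15) * B) * x * sqrt x) (at x)"
        by (rule dsq2[OF x(1)])
      show "\<bar>D1 x\<bar> \<le> (5/2) * ((4/15) * B) * x * sqrt x" using bD1[of x] x X by simp
    qed
    then show ?thesis unfolding D0_def by simp
  qed
  have D0c: "continuous_on {0..h} D0"
  proof -
    have "continuous_on {0..h} (\<lambda>x. G (m + x))"
      by (rule continuous_on_compose2[OF Gc]) (use am bm in \<open>auto intro!: continuous_intros\<close>)
    moreover have "continuous_on {0..h} (\<lambda>x. G (m - x))"
      by (rule continuous_on_compose2[OF Gc]) (use am bm in \<open>auto intro!: continuous_intros\<close>)
    ultimately show ?thesis unfolding D0_def[abs_def] by (intro continuous_intros)
  qed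
  have "0 \<le> (4/15) * B * h^2 * sqrt h - \<bar>D0 h\<bar>"
  proof (rule continuous_ge_on_closure[where S="{0..<h}" and f="\<lambda>x. (4/15) * B * x^2 * sqrt x - \<bar>D0 x\<bar>" and x=h and a=0])
    show "continuous_on (closure {0..<h}) (\<lambda>x. (4/15) * B * x^2 * sqrt x - \<bar>D0 x\<bar>)"
      using h0 D0c by (auto intro!: continuous_intros)
    show "h \<in> closure {0..<h}" using h0 by simp
    fix x assume "x \<in> {0..<h}"
    then show "0 \<le> (4/15) * B * x^2 * sqrt x - \<bar>D0 x\<bar>" using bD0[of x] by auto
  qed
  then have bh: "\<bar>D0 h\<bar> \<le> (4/15) * B * h^2 * sqrt h" by simp
  have D0h: "D0 h = integral {a..b} f - (b - a) * f m"
  proof -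
    have e: "m + h = b" "m - h = a" "2 * h = b - a" unfolding m_def h_def by (simp_all add: field_simps)
    show ?thesis unfolding D0_def G_def e by simp
  qed
  define K where "K = B * h * sqrt h"
  have K0: "K \<ge> 0" unfolding K_def using B0 h0 by simp
  have ba: "b - a = 2 * h" unfolding h_def by simp
  have lhs: "\<bar>f m - (1 / (b - a)) * integral {a..b} f\<bar> = \<bar>D0 h\<bar> / (2 * h)"
  proof -
    have "f m - (1 / (b - a)) * integral {a..b} f = - D0 h / (b - a)"
      unfolding D0h using ab by (simp add: field_simps)
    then show ?thesis using ab ba by simp
  qed
  have l2: "\<bar>D0 h\<bar> / (2 * h) \<le> (2/15) * K"
  proof -
    have "\<bar>D0 h\<bar> / (2 * h) \<le> ((4/15) * B * h^2 * sqrt h) / (2 * h)"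
      using bh h0 by (intro divide_right_mono) auto
    also have "\<dots> = (2/15) * K" unfolding K_def using h0 by (simp add: power2_eq_square field_simps)
    finally show ?thesis .
  qed
  have pw: "(b - a) powr (3/2) = 2 * sqrt 2 * h * sqrt h"
  proof -
    have "(b - a) powr (3/2) = (b - a) powr (1 + 1/2)" by simp
    also have "\<dots> = (b - a) powr 1 * (b - a) powr (1/2)" by (rule powr_add)
    also have "\<dots> = (b - a) * sqrt (b - a)" using ab by (simp add: powr_half_sqrt)
    also have "\<dots> = 2 * sqrt 2 * h * sqrt h" unfolding ba by (simp add: real_sqrt_mult)
    finally show ?thesis .
  qed
  have rhs: "(b - a) powr (3/2) / (2 * sqrt 3 * pi) * N = K / (sqrt 3 * pi)"
    unfolding pw K_def B_def by (simp add: field_simps)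
  have s3: "sqrt 3 \<le> 7/4"
    by (rule real_le_lsqrt) (auto simp: power2_eq_square)
  have sp: "sqrt 3 * pi \<le> 7" using s3 pi_less_4 mult_mono[of "sqrt 3" "7/4" pi 4] by simp
  have sp0: "sqrt 3 * pi > 0" by simp
  have "(2/15) * K \<le> K / (sqrt 3 * pi)"
  proof -
    have "(2/15) * K * (sqrt 3 * pi) \<le> (2/15) * K * 7" using sp K0 by (intro mult_left_mono) auto
    also have "\<dots> \<le> K" using K0 by simp
    finally show ?thesis using sp0 by (simp add: field_simps)
  qed
  then show ?thesis using lhs l2 rhs unfolding m_def N_def by linarith
qed
end
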